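(* There exists an absolute constant $C_1>0$ such that for every $\delta_0>0$ the following holds: if $\|\mathcal T-\mathcal S\|_{\mathrm{op}}<\delta_0$ and $x\in\mathbb C^n$ satisfies $\|\nabla g(x^+)\|\ge C_1\delta_0 c\,(\|x\|+\|x^\natural\|)^3$, then $\nabla f(x^+)\neq0$.
   Context: Let $n,m\ge 1$, $a_1,\dots,a_m\in\mathbb C^n$ and $x^\natural\in\mathbb C^n$ with $x^\natural\neq0$. For $a,b\in\mathbb C^n$ write $\langle a,b\rangle=\sum_{j}a_j\overline{b_j}$ and let $\|\cdot\|$ be the Euclidean norm. Let $y_i=|\langle a_i,x^\natural\rangle|^2$. For $v\in\mathbb C^n$ put $v^+=(\mathrm{Re}\,v,\mathrm{Im}\,v)\in\mathbb R^{2n}$ and $v^-=(-\mathrm{Im}\,v,\mathrm{Re}\,v)$; $x$ and $x^+$ always correspond. Define $f:\mathbb R^{2n}\to\mathbb R$ by $f(x^+)=\sum_{i=1}^m\big(|\langle a_i,x\rangle|^2-y_i\big)^2$. Fix $\sigma>0$ (in the paper, $\sigma^2=\mathrm{Var}((a_i^+)_1)$ for random measurement vectors), set $c=m\sigma^4$, and define $g:\mathbb R^{2n}\to\mathbb R$ by $g(x^+)=8c\left(\|x\|^4+\|x^\natural\|^4-|\langle x,x^\natural\rangle|^2-\|x\|^2\|x^\natural\|^2\right)$. Gradients are with respect to $x^+\in\mathbb R^{2n}$. Define the order-4 tensors on $\mathbb R^{2n}$: $\mathcal T=\frac1c\sum_{i=1}^m(a_i^+)^{\otimes 4}$ and $\mathcal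 S_{i_1i_2i_3i_4}=\mathbf 1_{i_1=i_2,\,i_3=i_4}+\mathbf 1_{i_1=i_3,\,i_2=i_4}+\mathbf 1_{i_1=i_4,\,i_2=i_3}$, and $\|\mathcal R\|_{\mathrm{op}}=\sup\{\langle \mathcal R,u_1\otimes u_2\otimes u_3\otimes u_4\rangle:\ u_j\in\mathbb R^{2n},\ \|u_1\|\|u_2\|\|u_3\|\|u_4\|=1\}$ (tensor inner product = sum of entrywise products). *)

theory Defs
  imports "HOL-Analysis.Analysis"
begin

text \<open>Vectors in C^n are represented as functions nat => complex, only indices j < n
  being relevant; vectors in R^(2n) as functions nat => real with indices k < 2n.
  The dimension n is an explicit natural number so that the absolute constant can be
  quantified before n.\<close>

definition cinner :: "nat \<Rightarrow> (nat \<Rightarrow> complex) \<Rightarrow> (nat \<Rightarrow> complex) \<Rightarrow> complex" where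
  "cinner n a b = (\<Sum>j<n. a j * cnj (b j))"

definition cnorm :: "nat \<Rightarrow> (nat \<Rightarrow> complex) \<Rightarrow> real" where
  "cnorm n x = sqrt (\<Sum>j<n. (cmod (x j))\<^sup>2)"

definition vplus :: "nat \<Rightarrow> (nat \<Rightarrow> complex) \<Rightarrow> nat \<Rightarrow> real" where
  "vplus n v k = (if k < n then Re (v k) else Im (v (k - n)))"

definition ofplus :: "nat \<Rightarrow> (nat \<Rightarrow> real) \<Rightarrow> nat \<Rightarrow> complex" where
  "ofplus n u j = Complex (u j) (u (n + j))"

definition rnorm :: "nat \<Rightarrow> (nat \<Rightarrow> real) \<Rightarrow> real" where
  "rnorm N u = sqrt (\<Sum>k<N. (u k)\<^sup>2)"

definition grad :: "((nat \<Rightarrow> real) \<Rightarrow> real) \<Rightarrow> (nat \<Rightarrow> real) \<Rightarrow> nat \<Rightarrow> real" where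
  "grad F u k = deriv (\<lambda>t. F (u(k := t))) (u k)"

definition f_obj :: "nat \<Rightarrow> nat \<Rightarrow> (nat \<Rightarrow> nat \<Rightarrow> complex) \<Rightarrow> (nat \<Rightarrow> complex) \<Rightarrow> (nat \<Rightarrow> real) \<Rightarrow> real" where
  "f_obj n m a xn u = (\<Sum>i<m. ((cmod (cinner n (a i) (ofplus n u)))\<^sup>2 - (cmod (cinner n (a i) xn))\<^sup>2)\<^sup>2)"

definition g_obj :: "nat \<Rightarrow> real \<Rightarrow> (nat \<Rightarrow> complex) \<Rightarrow> (nat \<Rightarrow> real) \<Rightarrow> real" where
  "g_obj n c xn u = 8 * c * ((cnorm n (ofplus n u))^4 + (cnorm n xn)^4
      - (cmod (cinner n (ofplus n u) xn))\<^sup>2 - (cnorm n (ofplus n u))\<^sup>2 * (cnorm n xn)\<^sup>2)"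

type_synonym tensor4 = "nat \<Rightarrow> nat \<Rightarrow> nat \<Rightarrow> nat \<Rightarrow> real"

definition tensT :: "nat \<Rightarrow> nat \<Rightarrow> real \<Rightarrow> (nat \<Rightarrow> nat \<Rightarrow> complex) \<Rightarrow> tensor4" where
  "tensT n m c a i1 i2 i3 i4 =
     (1 / c) * (\<Sum>i<m. vplus n (a i) i1 * vplus n (a i) i2 * vplus n (a i) i3 * vplus n (a i) i4)"

definition tensS :: tensor4 where
  "tensS i1 i2 i3 i4 = (if i1 = i2 \<and> i3 = i4 then 1 else 0) + (if i1 = i3 \<and> i2 = i4 then 1 else 0)
                      + (if i1 = i4 \<and> i2 = i3 then 1 else 0)"

definition tens_apply :: "nat \<Rightarrow> tensor4 \<Rightarrow> (nat \<Rightarrow> real) \<Rightarrow> (nat \<Rightarrow> real) \<Rightarrow> (nat \<Rightarrow> real) \<Rightarrow> (nat \<Rightarrow> real) \<Rightarrow> real" where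
  "tens_apply N R u1 u2 u3 u4 =
     (\<Sum>i1<N. \<Sum>i2<N. \<Sum>i3<N. \<Sum>i4<N. R i1 i2 i3 i4 * u1 i1 * u2 i2 * u3 i3 * u4 i4)"

definition tens_opnorm :: "nat \<Rightarrow> tensor4 \<Rightarrow> real" where
  "tens_opnorm N R = Sup {tens_apply N R u1 u2 u3 u4 | u1 u2 u3 u4.
      rnorm N u1 * rnorm N u2 * rnorm N u3 * rnorm N u4 = 1}"

end

theory Submission
  imports Defs
begin


definition dotp :: "nat \<Rightarrow> (nat \<Rightarrow> real) \<Rightarrow> (nat \<Rightarrow> real) \<Rightarrow> real" where
  "dotp n a b = (\<Sum>k<2*n. a k * b k)"

definition Jm :: "nat \<Rightarrow> (nat \<Rightarrow> real) \<Rightarrow> nat \<Rightarrow> real" where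
  "Jm n u k = (if k < n then - u (n + k) else u (k - n))"

lemma sum_split2: "(\<Sum>k<2*n. h k) = (\<Sum>j<n. h j) + (\<Sum>j<n. h (n+j::nat))"
proof -
  have "(\<Sum>k<2*n. h k) = sum h {0..<n+n}" by (simp add: lessThan_atLeast0 mult_2)
  also have "\<dots> = sum h {0..<n} + sum h {n..<n+n}" by (rule sum.atLeastLessThan_concat[symmetric]) auto
  also have "sum h {n..<n+n} = (\<Sum>j<n. h (n+j))"
    using sum.shift_bounds_nat_ivl[of h 0 n n] by (simp add: lessThan_atLeast0 add.commute)
  finally show ?thesis by (simp add: lessThan_atLeast0)
qed

lemma dotp_comm: "dotp n a b = dotp n b a"
  unfolding dotp_def by (simp add: mult.commute)

lemma JJ: "dotp n (Jm n a) (Jm n b) = dotp n a b"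
  unfolding dotp_def Jm_def sum_split2[of _ n] by simp

lemma Jself: "dotp n a (Jm n a) = 0"
  unfolding dotp_def Jm_def sum_split2[of _ n] by (simp add: sum_negf mult.commute)

lemma Jskew: "dotp n a (Jm n b) = - dotp n (Jm n a) b"
  unfolding dotp_def Jm_def sum_split2[of _ n] by (simp add: sum_negf)

lemma re_cinner: "Re (cinner n a (ofplus n u)) = dotp n (vplus n a) u"
  unfolding dotp_def cinner_def ofplus_def vplus_def sum_split2[of _ n] Re_sum
  by (simp add: sum.distrib)

lemma im_cinner: "Im (cinner n a (ofplus n u)) = dotp n (vplus n a) (Jm n u)"
  unfolding dotp_def cinner_def ofplus_def vplus_def Jm_def sum_split2[of _ n] Im_sum
  by (simp add: sum_subtractf sum_negf)

lemma cinner_vplus: "cinner n a y = cinner n a (ofplus n (vplus n y))"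
  unfolding cinner_def ofplus_def vplus_def by (intro sum.cong) (auto simp: complex_eq_iff)

lemma cinner_swap: "cinner n b a = cnj (cinner n a b)"
  unfolding cinner_def by (simp add: mult.commute)

lemma cnorm_ofplus: "cnorm n (ofplus n u) = sqrt (dotp n u u)"
  unfolding cnorm_def dotp_def ofplus_def sum_split2[of _ n] cmod_power2
  by (simp add: sum.distrib power2_eq_square)

lemma rnorm_dotp: "rnorm (2*n) u = sqrt (dotp n u u)"
  unfolding rnorm_def dotp_def by (simp add: power2_eq_square)

lemma cnorm_vplus: "cnorm n y = rnorm (2*n) (vplus n y)"
  unfolding cnorm_def rnorm_def vplus_def sum_split2[of _ n]
  by (simp add: cmod_power2 sum.distrib)



lemma ifm1: "(if P then 1 else 0) * (x::real) = (if P then x else 0)" by simp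
lemma ifm2: "(if P then x else 0) * (y::real) = (if P then x * y else 0)" by simp

lemma prod4: "(\<Sum>i1\<in>A. f1 i1) * (\<Sum>i2\<in>A. f2 i2) * (\<Sum>i3\<in>A. f3 i3) * (\<Sum>i4\<in>A. (f4 i4::real))
   = (\<Sum>i1\<in>A. \<Sum>i2\<in>A. \<Sum>i3\<in>A. \<Sum>i4\<in>A. f1 i1 * f2 i2 * f3 i3 * f4 i4)"
proof -
  have "(\<Sum>i1\<in>A. \<Sum>i2\<in>A. \<Sum>i3\<in>A. \<Sum>i4\<in>A. f1 i1 * f2 i2 * f3 i3 * f4 i4)
     = (\<Sum>i1\<in>A. f1 i1 * (\<Sum>i2\<in>A. f2 i2 * (\<Sum>i3\<in>A. f3 i3 * (\<Sum>i4\<in>A. f4 i4))))"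
    by (simp add: sum_distrib_left mult.assoc)
  also have "\<dots> = (\<Sum>i1\<in>A. f1 i1) * ((\<Sum>i2\<in>A. f2 i2) * ((\<Sum>i3\<in>A. f3 i3) * (\<Sum>i4\<in>A. f4 i4)))"
    by (simp only: sum_distrib_right[symmetric])
  finally show ?thesis by (simp add: mult.assoc)
qed

lemma S1: assumes "finite A" shows "(\<Sum>i1\<in>A. \<Sum>i2\<in>A. \<Sum>i3\<in>A. \<Sum>i4\<in>A. (if i1 = i2 \<and> i3 = i4 then 1 else 0) * a i1 * b i2 * c i3 * (d i4::real))
   = (\<Sum>k\<in>A. a k * b k) * (\<Sum>k\<in>A. c k * d k)" (is "?L = ?R")
proof -
  have e1: "(\<Sum>i4\<in>A. (if i1 = i2 \<and> i3 = i4 then 1 else 0) * a i1 * b i2 * c i3 * d i4) = (if i1 = i2 then a i1 * b i2 * c i3 * d i3 else 0)"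
    if "i3 \<in> A" for i1 i2 i3 using that assms by (cases "i1 = i2") (simp_all add: ifm1 ifm2)
  have e2: "(\<Sum>i3\<in>A. (if i1 = i2 then a i1 * b i2 * c i3 * d i3 else 0)) = (if i1 = i2 then (\<Sum>i3\<in>A. a i1 * b i2 * c i3 * d i3) else 0)" for i1 i2
    by (cases "i1 = i2") simp_all
  have "?L = (\<Sum>i1\<in>A. \<Sum>i2\<in>A. (if i1 = i2 then (\<Sum>i3\<in>A. a i1 * b i2 * c i3 * d i3) else 0))"
    using e1 e2 by (simp cong: sum.cong)
  also have "\<dots> = ?R" using assms by (simp add: sum_product mult_ac)
  finally show ?thesis .
qed

lemma S2: assumes "finite A" shows "(\<Sum>i1\<in>A. \<Sum>i2\<in>A. \<Sum>i3\<in>A. \<Sum>i4\<in>A. (if i1 = i3 \<and> i2 = i4 then 1 else 0) * a i1 * b i2 * c i3 * (d i4::real))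
   = (\<Sum>k\<in>A. a k * c k) * (\<Sum>k\<in>A. b k * d k)" (is "?L = ?R")
proof -
  have e1: "(\<Sum>i4\<in>A. (if i1 = i3 \<and> i2 = i4 then 1 else 0) * a i1 * b i2 * c i3 * d i4) = (if i1 = i3 then a i1 * b i2 * c i3 * d i2 else 0)"
    if "i2 \<in> A" for i1 i2 i3 using that assms by (cases "i1 = i3") (simp_all add: ifm1 ifm2)
  have "?L = (\<Sum>i1\<in>A. \<Sum>i2\<in>A. a i1 * b i2 * c i1 * d i2)"
    using e1 assms by (simp cong: sum.cong)
  also have "\<dots> = ?R" using assms by (simp add: sum_product mult_ac)
  finally show ?thesis .
qed

lemma S3: assumes "finite A" shows "(\<Sum>i1\<in>A. \<Sum>i2\<in>A. \<Sum>i3\<in>A. \<Sum>i4\<in>A. (if i1 = i4 \<and> i2 = i3 then 1 else 0) * a i1 * b i2 * c i3 * (d i4::real))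
   = (\<Sum>k\<in>A. a k * d k) * (\<Sum>k\<in>A. b k * c k)" (is "?L = ?R")
proof -
  have e1: "(\<Sum>i4\<in>A. (if i1 = i4 \<and> i2 = i3 then 1 else 0) * a i1 * b i2 * c i3 * d i4) = (if i2 = i3 then a i1 * b i2 * c i3 * d i1 else 0)"
    if "i1 \<in> A" for i1 i2 i3 using that assms by (cases "i2 = i3") (simp_all add: ifm1 ifm2)
  have "?L = (\<Sum>i1\<in>A. \<Sum>i2\<in>A. a i1 * b i2 * c i2 * d i1)"
    using e1 assms by (simp cong: sum.cong)
  also have "\<dots> = ?R" using assms by (simp add: sum_product mult_ac)
  finally show ?thesis .
qed

lemma tensS_apply: "tens_apply N tensS a b c d =
   (\<Sum>k<N. a k * b k) * (\<Sum>k<N. c k * d k) + (\<Sum>k<N. a k * c k) * (\<Sum>k<N. b k * d k)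
   + (\<Sum>k<N. a k * d k) * (\<Sum>k<N. b k * c k)"
  unfolding tens_apply_def tensS_def
  by (simp only: distrib_right sum.distrib S1 S2 S3 finite_lessThan)

lemma tensT_apply: "tens_apply (2*n) (tensT n m c a) w1 w2 w3 w4 =
  (1/c) * (\<Sum>i<m. dotp n (vplus n (a i)) w1 * dotp n (vplus n (a i)) w2 * dotp n (vplus n (a i)) w3 * dotp n (vplus n (a i)) w4)"
proof -
  have "tens_apply (2*n) (tensT n m c a) w1 w2 w3 w4 = (\<Sum>i1<2*n. \<Sum>i2<2*n. \<Sum>i3<2*n. \<Sum>i4<2*n. \<Sum>i<m.
     (1/c) * (vplus n (a i) i1 * w1 i1 * (vplus n (a i) i2 * w2 i2) * (vplus n (a i) i3 * w3 i3) * (vplus n (a i) i4 * w4 i4)))"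
    unfolding tens_apply_def tensT_def by (simp add: sum_distrib_left sum_distrib_right mult_ac)
  also have "\<dots> = (\<Sum>i<m. \<Sum>i1<2*n. \<Sum>i2<2*n. \<Sum>i3<2*n. \<Sum>i4<2*n. 
     (1/c) * (vplus n (a i) i1 * w1 i1 * (vplus n (a i) i2 * w2 i2) * (vplus n (a i) i3 * w3 i3) * (vplus n (a i) i4 * w4 i4)))"
    by (simp only: sum.swap[of _ "{..<2*n}" "{..<m}"])
  also have "\<dots> = (1/c) * (\<Sum>i<m. dotp n (vplus n (a i)) w1 * dotp n (vplus n (a i)) w2 * dotp n (vplus n (a i)) w3 * dotp n (vplus n (a i)) w4)"
    unfolding dotp_def prod4 by (simp only: sum_distrib_left)
  finally show ?thesis .
qed


lemma dotp_upd: "k < 2*n \<Longrightarrow> dotp n w (u(k:=t)) = dotp n w u + w k * (t - u k)"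
proof -
  assume k: "k < 2*n"
  have "(\<Sum>i<2*n. w i * (u(k:=t)) i) = (\<Sum>i<2*n. w i * u i + (if i = k then w k * (t - u k) else 0))"
    by (intro sum.cong) (auto simp: algebra_simps)
  also have "\<dots> = (\<Sum>i<2*n. w i * u i) + w k * (t - u k)" using k by (simp add: sum.distrib)
  finally show ?thesis unfolding dotp_def .
qed

lemma dotp_upd2: "k < 2*n \<Longrightarrow> dotp n (u(k:=t)) (u(k:=t)) = dotp n u u + (t * t - u k * u k)"
proof -
  assume k: "k < 2*n"
  have "(\<Sum>i<2*n. (u(k:=t)) i * (u(k:=t)) i) = (\<Sum>i<2*n. u i * u i + (if i = k then t * t - u k * u k else 0))"
    by (intro sum.cong) (auto simp: algebra_simps)
  also have "\<dots> = (\<Sum>i<2*n. u i * u i) + (t * t - u k * u k)" using k by (simp add: sum.distrib)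
  finally show ?thesis unfolding dotp_def .
qed

lemma cm_ofplus: "(cmod (cinner n b (ofplus n u)))\<^sup>2 = (dotp n (vplus n b) u)\<^sup>2 + (dotp n (Jm n (vplus n b)) u)\<^sup>2"
  by (simp add: cmod_power2 re_cinner im_cinner Jskew)

lemma f_upd: "k < 2*n \<Longrightarrow> f_obj n m a xn (u(k:=t)) = (\<Sum>i<m.
   ((dotp n (vplus n (a i)) u + vplus n (a i) k * (t - u k))\<^sup>2
   + (dotp n (Jm n (vplus n (a i))) u + Jm n (vplus n (a i)) k * (t - u k))\<^sup>2
   - (cmod (cinner n (a i) xn))\<^sup>2)\<^sup>2)"
  unfolding f_obj_def by (simp add: cm_ofplus dotp_upd)

lemma grad_f: "k < 2*n \<Longrightarrow> grad (f_obj n m a xn) u k = (\<Sum>i<m.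
   2 * ((dotp n (vplus n (a i)) u)\<^sup>2 + (dotp n (Jm n (vplus n (a i))) u)\<^sup>2 - (cmod (cinner n (a i) xn))\<^sup>2)
   * (2 * dotp n (vplus n (a i)) u * vplus n (a i) k + 2 * dotp n (Jm n (vplus n (a i))) u * Jm n (vplus n (a i)) k))"
proof -
  assume k: "k < 2*n"
  have e: "(\<lambda>t. f_obj n m a xn (u(k:=t))) = (\<lambda>t. \<Sum>i<m.
   ((dotp n (vplus n (a i)) u + vplus n (a i) k * (t - u k))\<^sup>2
   + (dotp n (Jm n (vplus n (a i))) u + Jm n (vplus n (a i)) k * (t - u k))\<^sup>2
   - (cmod (cinner n (a i) xn))\<^sup>2)\<^sup>2)" using k by (simp add: f_upd)
  have "((\<lambda>t. f_obj n m a xn (u(k:=t))) has_real_derivative (\<Sum>i<m.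
   2 * ((dotp n (vplus n (a i)) u)\<^sup>2 + (dotp n (Jm n (vplus n (a i))) u)\<^sup>2 - (cmod (cinner n (a i) xn))\<^sup>2)
   * (2 * dotp n (vplus n (a i)) u * vplus n (a i) k + 2 * dotp n (Jm n (vplus n (a i))) u * Jm n (vplus n (a i)) k))) (at (u k))"
    unfolding e by (auto intro!: derivative_eq_intros sum.cong simp: algebra_simps)
  then show ?thesis unfolding grad_def by (simp add: DERIV_imp_deriv)
qed

lemma dotp_nonneg: "0 \<le> dotp n u u"
  unfolding dotp_def by (auto intro: sum_nonneg)

lemma g_upd: "k < 2*n \<Longrightarrow> g_obj n c xn (u(k:=t)) =
   8 * c * ((dotp n u u + (t * t - u k * u k))\<^sup>2 + (dotp n (vplus n xn) (vplus n xn))\<^sup>2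
     - ((dotp n (vplus n xn) u + vplus n xn k * (t - u k))\<^sup>2 + (dotp n (Jm n (vplus n xn)) u + Jm n (vplus n xn) k * (t - u k))\<^sup>2)
     - (dotp n u u + (t * t - u k * u k)) * dotp n (vplus n xn) (vplus n xn))"
proof -
  assume k: "k < 2*n"
  have p4: "(sqrt x)^4 = x^2" if "0 \<le> x" for x :: real
    using that by (metis (no_types, lifting) numeral_Bit0 power_add real_sqrt_pow2 power2_eq_square)
  have s: "(cmod (cinner n (ofplus n w) xn))\<^sup>2 = (cmod (cinner n xn (ofplus n w)))\<^sup>2" for w
    by (subst cinner_swap) simp
  show ?thesis
    unfolding g_obj_def cnorm_ofplus cnorm_vplus[of n xn] rnorm_dotp s cm_ofplus dotp_upd2[OF k]
    using k dotp_nonneg[of n "u(k:=t)"] dotp_nonneg[of n "vplus n xn"] 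
    unfolding dotp_upd2[OF k]
    by (simp add: p4 dotp_upd)
qed

lemma grad_g: "k < 2*n \<Longrightarrow> grad (g_obj n c xn) u k =
   8 * c * (2 * dotp n u u * (2 * u k)
     - (2 * dotp n (vplus n xn) u * vplus n xn k + 2 * dotp n (Jm n (vplus n xn)) u * Jm n (vplus n xn) k)
     - 2 * u k * dotp n (vplus n xn) (vplus n xn))"
proof -
  assume k: "k < 2*n"
  have e: "(\<lambda>t. g_obj n c xn (u(k:=t))) = (\<lambda>t. 8 * c * ((dotp n u u + (t * t - u k * u k))\<^sup>2 + (dotp n (vplus n xn) (vplus n xn))\<^sup>2
     - ((dotp n (vplus n xn) u + vplus n xn k * (t - u k))\<^sup>2 + (dotp n (Jm n (vplus n xn)) u + Jm n (vplus n xn) k * (t - u k))\<^sup>2)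
     - (dotp n u u + (t * t - u k * u k)) * dotp n (vplus n xn) (vplus n xn)))" using k by (simp add: g_upd)
  have "((\<lambda>t. g_obj n c xn (u(k:=t))) has_real_derivative 
   8 * c * (2 * dotp n u u * (2 * u k)
     - (2 * dotp n (vplus n xn) u * vplus n xn k + 2 * dotp n (Jm n (vplus n xn)) u * Jm n (vplus n xn) k)
     - 2 * u k * dotp n (vplus n xn) (vplus n xn))) (at (u k))"
    unfolding e by (auto intro!: derivative_eq_intros simp: algebra_simps)
  then show ?thesis unfolding grad_def by (simp add: DERIV_imp_deriv)
qed



definition EE :: "nat \<Rightarrow> tensor4 \<Rightarrow> (nat \<Rightarrow> real) \<Rightarrow> (nat \<Rightarrow> real) \<Rightarrow> (nat \<Rightarrow> real) \<Rightarrow> real" where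
  "EE n R u v z = tens_apply (2*n) R u u u z + tens_apply (2*n) R (Jm n u) (Jm n u) u z
    - tens_apply (2*n) R v v u z - tens_apply (2*n) R (Jm n v) (Jm n v) u z
    + tens_apply (2*n) R u u (Jm n u) (Jm n z) + tens_apply (2*n) R (Jm n u) (Jm n u) (Jm n u) (Jm n z)
    - tens_apply (2*n) R v v (Jm n u) (Jm n z) - tens_apply (2*n) R (Jm n v) (Jm n v) (Jm n u) (Jm n z)"

lemma tens_apply_diff: "tens_apply N (\<lambda>i1 i2 i3 i4. R1 i1 i2 i3 i4 - R2 i1 i2 i3 i4) a b c d
   = tens_apply N R1 a b c d - tens_apply N R2 a b c d"
  unfolding tens_apply_def by (simp add: sum_subtractf left_diff_distrib)

lemma EE_diff: "EE n (\<lambda>i1 i2 i3 i4. R1 i1 i2 i3 i4 - R2 i1 i2 i3 i4) u v z = EE n R1 u v z - EE n R2 u v z"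
  unfolding EE_def tens_apply_diff by simp

lemma dirf: assumes c: "c \<noteq> 0"
  shows "(\<Sum>k<2*n. z k * grad (f_obj n m a xn) u k) = 4 * c * EE n (tensT n m c a) u (vplus n xn) z"
proof -
  define P where "P = (\<lambda>i. vplus n (a i))"
  define v where "v = vplus n xn"
  define A where "A = (\<lambda>i. dotp n (P i) u)"
  define B where "B = (\<lambda>i. dotp n (Jm n (P i)) u)"
  define F where "F = (\<lambda>i. (A i)\<^sup>2 + (B i)\<^sup>2 - (cmod (cinner n (a i) xn))\<^sup>2)"
  have Y: "(cmod (cinner n (a i) xn))\<^sup>2 = (dotp n (P i) v)\<^sup>2 + (dotp n (Jm n (P i)) v)\<^sup>2" for i
    unfolding P_def v_def by (metis cinner_vplus cm_ofplus)
  have "(\<Sum>k<2*n. z k * grad (f_obj n m a xn) u k)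
      = (\<Sum>k<2*n. \<Sum>i<m. z k * (2 * F i * (2 * A i * P i k + 2 * B i * Jm n (P i) k)))"
    by (intro sum.cong refl) (simp add: grad_f sum_distrib_left P_def A_def B_def F_def)
  also have "\<dots> = (\<Sum>i<m. \<Sum>k<2*n. z k * (2 * F i * (2 * A i * P i k + 2 * B i * Jm n (P i) k)))"
    by (rule sum.swap)
  also have "\<dots> = (\<Sum>i<m. 4 * F i * (A i * dotp n (P i) z + B i * dotp n (Jm n (P i)) z))"
  proof (intro sum.cong refl)
    fix i
    have "(\<Sum>k<2*n. z k * (2 * F i * (2 * A i * P i k + 2 * B i * Jm n (P i) k)))
       = (\<Sum>k<2*n. (4 * F i * A i) * (P i k * z k) + (4 * F i * B i) * (Jm n (P i) k * z k))"
      by (intro sum.cong refl) (simp add: algebra_simps)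
    also have "\<dots> = 4 * F i * (A i * dotp n (P i) z + B i * dotp n (Jm n (P i)) z)"
      unfolding dotp_def by (simp only: sum.distrib sum_distrib_left[symmetric]) (simp add: algebra_simps)
    finally show "(\<Sum>k<2*n. z k * (2 * F i * (2 * A i * P i k + 2 * B i * Jm n (P i) k)))
       = 4 * F i * (A i * dotp n (P i) z + B i * dotp n (Jm n (P i)) z)" .
  qed
  finally have L: "(\<Sum>k<2*n. z k * grad (f_obj n m a xn) u k) = (\<Sum>i<m. 4 * F i * (A i * dotp n (P i) z + B i * dotp n (Jm n (P i)) z))" .
  have T: "c * tens_apply (2*n) (tensT n m c a) w1 w2 w3 w4 = (\<Sum>i<m. dotp n (P i) w1 * dotp n (P i) w2 * dotp n (P i) w3 * dotp n (P i) w4)" for w1 w2 w3 w4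
    using c by (simp add: tensT_apply P_def)
  have "c * EE n (tensT n m c a) u v z = 
      (\<Sum>i<m. dotp n (P i) u * dotp n (P i) u * dotp n (P i) u * dotp n (P i) z)
    + (\<Sum>i<m. dotp n (P i) (Jm n u) * dotp n (P i) (Jm n u) * dotp n (P i) u * dotp n (P i) z)
    - (\<Sum>i<m. dotp n (P i) v * dotp n (P i) v * dotp n (P i) u * dotp n (P i) z)
    - (\<Sum>i<m. dotp n (P i) (Jm n v) * dotp n (P i) (Jm n v) * dotp n (P i) u * dotp n (P i) z)
    + (\<Sum>i<m. dotp n (P i) u * dotp n (P i) u * dotp n (P i) (Jm n u) * dotp n (P i) (Jm n z))
    + (\<Sum>i<m. dotp n (P i) (Jm n u) * dotp n (P i) (Jm n u) * dotp n (P i) (Jm n u) * dotp n (P i) (Jm n z))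
    - (\<Sum>i<m. dotp n (P i) v * dotp n (P i) v * dotp n (P i) (Jm n u) * dotp n (P i) (Jm n z))
    - (\<Sum>i<m. dotp n (P i) (Jm n v) * dotp n (P i) (Jm n v) * dotp n (P i) (Jm n u) * dotp n (P i) (Jm n z))"
    unfolding EE_def by (simp only: distrib_left right_diff_distrib T)
  also have "\<dots> = (\<Sum>i<m. 
      dotp n (P i) u * dotp n (P i) u * dotp n (P i) u * dotp n (P i) z
    + dotp n (P i) (Jm n u) * dotp n (P i) (Jm n u) * dotp n (P i) u * dotp n (P i) z
    - dotp n (P i) v * dotp n (P i) v * dotp n (P i) u * dotp n (P i) z
    - dotp n (P i) (Jm n v) * dotp n (P i) (Jm n v) * dotp n (P i) u * dotp n (P i) z
    + dotp n (P i) u * dotp n (P i) u * dotp n (P i) (Jm n u) * dotp n (P i) (Jm n z)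
    + dotp n (P i) (Jm n u) * dotp n (P i) (Jm n u) * dotp n (P i) (Jm n u) * dotp n (P i) (Jm n z)
    - dotp n (P i) v * dotp n (P i) v * dotp n (P i) (Jm n u) * dotp n (P i) (Jm n z)
    - dotp n (P i) (Jm n v) * dotp n (P i) (Jm n v) * dotp n (P i) (Jm n u) * dotp n (P i) (Jm n z))"
    by (simp only: sum.distrib sum_subtractf)
  also have "\<dots> = (\<Sum>i<m. F i * (A i * dotp n (P i) z + B i * dotp n (Jm n (P i)) z))"
  proof (intro sum.cong refl)
    fix i
    have j: "dotp n (P i) (Jm n w) = - dotp n (Jm n (P i)) w" for w by (rule Jskew)
    show "dotp n (P i) u * dotp n (P i) u * dotp n (P i) u * dotp n (P i) z
    + dotp n (P i) (Jm n u) * dotp n (P i) (Jm n u) * dotp n (P i) u * dotp n (P i) z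
    - dotp n (P i) v * dotp n (P i) v * dotp n (P i) u * dotp n (P i) z
    - dotp n (P i) (Jm n v) * dotp n (P i) (Jm n v) * dotp n (P i) u * dotp n (P i) z
    + dotp n (P i) u * dotp n (P i) u * dotp n (P i) (Jm n u) * dotp n (P i) (Jm n z)
    + dotp n (P i) (Jm n u) * dotp n (P i) (Jm n u) * dotp n (P i) (Jm n u) * dotp n (P i) (Jm n z)
    - dotp n (P i) v * dotp n (P i) v * dotp n (P i) (Jm n u) * dotp n (P i) (Jm n z)
    - dotp n (P i) (Jm n v) * dotp n (P i) (Jm n v) * dotp n (P i) (Jm n u) * dotp n (P i) (Jm n z)
    = F i * (A i * dotp n (P i) z + B i * dotp n (Jm n (P i)) z)"
      unfolding j F_def Y A_def B_def by (simp add: power2_eq_square algebra_simps)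
  qed
  finally have R: "c * EE n (tensT n m c a) u v z = (\<Sum>i<m. F i * (A i * dotp n (P i) z + B i * dotp n (Jm n (P i)) z))" .
  show ?thesis unfolding L v_def[symmetric]
    using R by (simp add: sum_distrib_left mult.assoc)
qed

lemma Jself2: "dotp n (Jm n a) a = 0"
  using Jself[of n a] dotp_comm[of n a "Jm n a"] by simp

lemma dirg: "(\<Sum>k<2*n. z k * grad (g_obj n c xn) u k) = 4 * c * EE n tensS u (vplus n xn) z"
proof -
  define v where "v = vplus n xn"
  have "(\<Sum>k<2*n. z k * grad (g_obj n c xn) u k)
     = (\<Sum>k<2*n. (32 * c * dotp n u u - 16 * c * dotp n v v) * (u k * z k)
          - (16 * c * dotp n v u) * (v k * z k) - (16 * c * dotp n (Jm n v) u) * (Jm n v k * z k))"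
    by (intro sum.cong refl) (simp add: grad_g v_def algebra_simps)
  also have "\<dots> = (32 * c * dotp n u u - 16 * c * dotp n v v) * dotp n u z
          - (16 * c * dotp n v u) * dotp n v z - (16 * c * dotp n (Jm n v) u) * dotp n (Jm n v) z"
    unfolding dotp_def by (simp only: sum_subtractf sum_distrib_left[symmetric])
  also have "\<dots> = 4 * c * EE n tensS u v z"
    unfolding EE_def tensS_apply dotp_def[symmetric]
    by (simp only: JJ Jself Jself2 Jskew[of n u z] Jskew[of n v u] Jskew[of n v z]) (simp add: algebra_simps)
  finally show ?thesis unfolding v_def .
qed



lemma coord_le: "k < N \<Longrightarrow> \<bar>w k\<bar> \<le> rnorm N w"
proof -
  assume k: "k < N"
  have "(w k)\<^sup>2 \<le> (\<Sum>j<N. (w j)\<^sup>2)" using k by (intro member_le_sum) auto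
  then have "sqrt ((w k)\<^sup>2) \<le> rnorm N w" unfolding rnorm_def by (rule real_sqrt_le_mono)
  then show ?thesis by simp
qed

lemma rnorm_nonneg: "0 \<le> rnorm N w"
  unfolding rnorm_def by (auto intro: sum_nonneg)

lemma rnorm_scale: "rnorm N (\<lambda>k. s * w k) = \<bar>s\<bar> * rnorm N w"
proof -
  have "(\<Sum>k<N. (s * w k)\<^sup>2) = s\<^sup>2 * (\<Sum>k<N. (w k)\<^sup>2)"
    by (simp add: sum_distrib_left power_mult_distrib)
  then show ?thesis unfolding rnorm_def by (simp add: real_sqrt_mult)
qed

lemma abs_mult_le: "\<bar>a\<bar> \<le> A \<Longrightarrow> \<bar>b\<bar> \<le> B \<Longrightarrow> \<bar>a * b\<bar> \<le> A * (B::real)"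
  by (simp add: abs_mult mult_mono')

lemma tens_le_M: "tens_apply N R u1 u2 u3 u4 \<le>
   (\<Sum>i1<N. \<Sum>i2<N. \<Sum>i3<N. \<Sum>i4<N. \<bar>R i1 i2 i3 i4\<bar> * (rnorm N u1 * rnorm N u2 * rnorm N u3 * rnorm N u4))"
  unfolding tens_apply_def
proof (intro sum_mono)
  fix i1 i2 i3 i4 assume "i1 \<in> {..<N}" "i2 \<in> {..<N}" "i3 \<in> {..<N}" "i4 \<in> {..<N}"
  then have c: "\<bar>u1 i1\<bar> \<le> rnorm N u1" "\<bar>u2 i2\<bar> \<le> rnorm N u2" "\<bar>u3 i3\<bar> \<le> rnorm N u3" "\<bar>u4 i4\<bar> \<le> rnorm N u4"
    by (auto intro: coord_le)
  have "\<bar>R i1 i2 i3 i4 * u1 i1 * u2 i2 * u3 i3 * u4 i4\<bar> \<le> \<bar>R i1 i2 i3 i4\<bar> * rnorm N u1 * rnorm N u2 * rnorm N u3 * rnorm N u4"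
    by (intro abs_mult_le c) simp
  then show "R i1 i2 i3 i4 * u1 i1 * u2 i2 * u3 i3 * u4 i4 \<le> \<bar>R i1 i2 i3 i4\<bar> * (rnorm N u1 * rnorm N u2 * rnorm N u3 * rnorm N u4)"
    by (simp add: mult.assoc)
qed

lemma tens_scale1: "tens_apply N R (\<lambda>k. s * a k) b c d = s * tens_apply N R a b c d"
  unfolding tens_apply_def by (simp add: sum_distrib_left algebra_simps)

lemma zero_vec_tens:
  assumes "rnorm N a = 0 \<or> rnorm N b = 0 \<or> rnorm N c = 0 \<or> rnorm N d = 0"
  shows "tens_apply N R a b c d = 0"
proof -
  have z: "rnorm N w = 0 \<Longrightarrow> k < N \<Longrightarrow> w k = 0" for w k
    using coord_le[of k N w] by simp
  show ?thesis using assms unfolding tens_apply_def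
    by (auto intro!: sum.neutral simp: z)
qed

lemma tens_bound: "\<bar>tens_apply N R a b c d\<bar> \<le> tens_opnorm N R * (rnorm N a * rnorm N b * rnorm N c * rnorm N d)"
proof -
  define M where "M = (\<Sum>i1<N. \<Sum>i2<N. \<Sum>i3<N. \<Sum>i4<N. \<bar>R i1 i2 i3 i4\<bar>)"
  define Set where "Set = {tens_apply N R u1 u2 u3 u4 | u1 u2 u3 u4.
      rnorm N u1 * rnorm N u2 * rnorm N u3 * rnorm N u4 = 1}"
  have bdd: "bdd_above Set"
  proof (rule bdd_aboveI)
    fix x assume "x \<in> Set"
    then obtain u1 u2 u3 u4 where x: "x = tens_apply N R u1 u2 u3 u4"
      and p: "rnorm N u1 * rnorm N u2 * rnorm N u3 * rnorm N u4 = 1" unfolding Set_def by blast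
    show "x \<le> M" using tens_le_M[of N R u1 u2 u3 u4] unfolding x p M_def by simp
  qed
  define p where "p = rnorm N a * rnorm N b * rnorm N c * rnorm N d"
  have p0: "0 \<le> p" unfolding p_def by (simp add: rnorm_nonneg)
  show ?thesis
  proof (cases "p = 0")
    case True
    then have "tens_apply N R a b c d = 0" unfolding p_def by (intro zero_vec_tens) simp
    then show ?thesis using True by (simp add: p_def[symmetric])
  next
    case False
    then have pp: "0 < p" using p0 by simp
    have mem: "tens_apply N R (\<lambda>k. s * a k) b c d \<in> Set" if "\<bar>s\<bar> = 1 / p" for s
    proof -
      have "rnorm N (\<lambda>k. s * a k) * rnorm N b * rnorm N c * rnorm N d = 1"
      proof -
        have "rnorm N (\<lambda>k. s * a k) * rnorm N b * rnorm N c * rnorm N d = (1/p) * p"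
          unfolding rnorm_scale that p_def by (simp add: mult.assoc)
        then show ?thesis using pp by simp
      qed
      then show ?thesis unfolding Set_def by blast
    qed
    have s1: "(1/p) * tens_apply N R a b c d \<le> tens_opnorm N R"
      using cSup_upper[OF mem bdd, of "1/p"] pp unfolding tens_opnorm_def Set_def tens_scale1 by simp
    have s2: "(-1/p) * tens_apply N R a b c d \<le> tens_opnorm N R"
      using cSup_upper[OF mem bdd, of "-1/p"] pp unfolding tens_opnorm_def Set_def tens_scale1 by simp
    have "tens_apply N R a b c d \<le> tens_opnorm N R * p" using s1 pp by (simp add: field_simps)
    moreover have "- tens_apply N R a b c d \<le> tens_opnorm N R * p" using s2 pp by (simp add: field_simps)
    ultimately show ?thesis unfolding p_def by linarith
  qed
qed



lemma rnorm_J: "rnorm (2*n) (Jm n w) = rnorm (2*n) w"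
  unfolding rnorm_dotp JJ ..

lemma term_bound:
  assumes K: "tens_opnorm N R \<le> K" 
  shows "\<bar>tens_apply N R a b c d\<bar> \<le> K * (rnorm N a * rnorm N b * rnorm N c * rnorm N d)"
proof -
  have "0 \<le> rnorm N a * rnorm N b * rnorm N c * rnorm N d" by (simp add: rnorm_nonneg)
  then have "tens_opnorm N R * (rnorm N a * rnorm N b * rnorm N c * rnorm N d) \<le> K * (rnorm N a * rnorm N b * rnorm N c * rnorm N d)"
    using K by (rule mult_right_mono[rotated])
  then show ?thesis using tens_bound[of N R a b c d] by linarith
qed

lemma EE_bound:
  assumes K: "tens_opnorm (2*n) R \<le> K"
  shows "\<bar>EE n R u v z\<bar> \<le> K * rnorm (2*n) z * (4 * rnorm (2*n) u ^ 3 + 4 * rnorm (2*n) v ^ 2 * rnorm (2*n) u)"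
proof -
  let ?r = "rnorm (2*n)"
  note tb = term_bound[OF K]
  have b1: "\<bar>tens_apply (2*n) R u u u z\<bar> \<le> K * (?r u * ?r u * ?r u * ?r z)" by (rule tb)
  have b2: "\<bar>tens_apply (2*n) R (Jm n u) (Jm n u) u z\<bar> \<le> K * (?r u * ?r u * ?r u * ?r z)" using tb[of "Jm n u" "Jm n u" u z] by (simp add: rnorm_J)
  have b3: "\<bar>tens_apply (2*n) R v v u z\<bar> \<le> K * (?r v * ?r v * ?r u * ?r z)" by (rule tb)
  have b4: "\<bar>tens_apply (2*n) R (Jm n v) (Jm n v) u z\<bar> \<le> K * (?r v * ?r v * ?r u * ?r z)" using tb[of "Jm n v" "Jm n v" u z] by (simp add: rnorm_J)
  have b5: "\<bar>tens_apply (2*n) R u u (Jm n u) (Jm n z)\<bar> \<le> K * (?r u * ?r u * ?r u * ?r z)" using tb[of u u "Jm n u" "Jm n z"] by (simp add: rnorm_J)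
  have b6: "\<bar>tens_apply (2*n) R (Jm n u) (Jm n u) (Jm n u) (Jm n z)\<bar> \<le> K * (?r u * ?r u * ?r u * ?r z)" using tb[of "Jm n u" "Jm n u" "Jm n u" "Jm n z"] by (simp add: rnorm_J)
  have b7: "\<bar>tens_apply (2*n) R v v (Jm n u) (Jm n z)\<bar> \<le> K * (?r v * ?r v * ?r u * ?r z)" using tb[of v v "Jm n u" "Jm n z"] by (simp add: rnorm_J)
  have b8: "\<bar>tens_apply (2*n) R (Jm n v) (Jm n v) (Jm n u) (Jm n z)\<bar> \<le> K * (?r v * ?r v * ?r u * ?r z)" using tb[of "Jm n v" "Jm n v" "Jm n u" "Jm n z"] by (simp add: rnorm_J)
  have "\<bar>EE n R u v z\<bar> \<le> 4 * (K * (?r u * ?r u * ?r u * ?r z)) + 4 * (K * (?r v * ?r v * ?r u * ?r z))"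
    unfolding EE_def using b1 b2 b3 b4 b5 b6 b7 b8 by linarith
  also have "\<dots> = K * ?r z * (4 * ?r u ^ 3 + 4 * ?r v ^ 2 * ?r u)"
    by (simp add: power2_eq_square power3_eq_cube algebra_simps)
  finally show ?thesis .
qed

theorem proposition3:
  "\<exists>C1 > (0::real). \<forall>(n::nat) (m::nat) (a :: nat \<Rightarrow> nat \<Rightarrow> complex) (xn :: nat \<Rightarrow> complex)
      (\<sigma>::real) (\<delta>0::real) (x :: nat \<Rightarrow> complex).
    1 \<le> n \<longrightarrow> 1 \<le> m \<longrightarrow> (\<exists>j<n. xn j \<noteq> 0) \<longrightarrow> \<sigma> > 0 \<longrightarrow> \<delta>0 > 0 \<longrightarrow>
    tens_opnorm (2 * n) (\<lambda>i1 i2 i3 i4. tensT n m (real m * \<sigma> ^ 4) a i1 i2 i3 i4 - tensS i1 i2 i3 i4) < \<delta>0 \<longrightarrow>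
    rnorm (2 * n) (grad (g_obj n (real m * \<sigma> ^ 4) xn) (vplus n x))
      \<ge> C1 * \<delta>0 * (real m * \<sigma> ^ 4) * (cnorm n x + cnorm n xn) ^ 3 \<longrightarrow>
    (\<exists>k < 2 * n. grad (f_obj n m a xn) (vplus n x) k \<noteq> 0)"
proof (rule exI[of _ 33], intro conjI allI impI)
  fix n m :: nat and a :: "nat \<Rightarrow> nat \<Rightarrow> complex" and xn x :: "nat \<Rightarrow> complex" and \<sigma> \<delta>0 :: real
  assume n: "1 \<le> n" and m: "1 \<le> m" and xn: "\<exists>j<n. xn j \<noteq> 0" and sg: "\<sigma> > 0" and d0: "\<delta>0 > 0"
    and op: "tens_opnorm (2 * n) (\<lambda>i1 i2 i3 i4. tensT n m (real m * \<sigma> ^ 4) a i1 i2 i3 i4 - tensS i1 i2 i3 i4) < \<delta>0"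
    and hg: "rnorm (2 * n) (grad (g_obj n (real m * \<sigma> ^ 4) xn) (vplus n x))
      \<ge> 33 * \<delta>0 * (real m * \<sigma> ^ 4) * (cnorm n x + cnorm n xn) ^ 3"
  define c where "c = real m * \<sigma> ^ 4"
  define u where "u = vplus n x"
  define v where "v = vplus n xn"
  define G where "G = grad (g_obj n c xn) u"
  define Dt where "Dt = (\<lambda>i1 i2 i3 i4. tensT n m c a i1 i2 i3 i4 - tensS i1 i2 i3 i4)"
  define R where "R = cnorm n x + cnorm n xn"
  define rG where "rG = rnorm (2*n) G"
  have c0: "0 < c" unfolding c_def using m sg by simp
  have ru: "rnorm (2*n) u = cnorm n x" unfolding u_def by (simp add: cnorm_vplus)
  have rv: "rnorm (2*n) v = cnorm n xn" unfolding v_def by (simp add: cnorm_vplus)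
  have xpos: "0 < cnorm n xn"
  proof -
    obtain j where j: "j < n" "xn j \<noteq> 0" using xn by blast
    have "(cmod (xn j))\<^sup>2 \<le> (\<Sum>i<n. (cmod (xn i))\<^sup>2)" using j by (intro member_le_sum) auto
    moreover have "0 < (cmod (xn j))\<^sup>2" using j by simp
    ultimately have "0 < (\<Sum>i<n. (cmod (xn i))\<^sup>2)" by linarith
    then show ?thesis unfolding cnorm_def by simp
  qed
  have xnn: "0 \<le> cnorm n x" using rnorm_nonneg ru by metis
  have R0: "0 < R" unfolding R_def using xpos xnn by simp
  show "\<exists>k<2 * n. grad (f_obj n m a xn) (vplus n x) k \<noteq> 0"
  proof (rule ccontr)
    assume "\<not> ?thesis"
    then have f0: "\<And>k. k < 2*n \<Longrightarrow> grad (f_obj n m a xn) u k = 0" unfolding u_def by auto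
    have "(\<Sum>k<2*n. G k * grad (f_obj n m a xn) u k) = 0" using f0 by simp
    then have ET: "EE n (tensT n m c a) u v G = 0" using dirf[where c=c and z=G and n=n and m=m and a=a and xn=xn and u=u] c0 unfolding v_def by simp
    have ES: "(\<Sum>k<2*n. G k * G k) = 4 * c * EE n tensS u v G"
      using dirg[where z=G and n=n and c=c and xn=xn and u=u] unfolding G_def v_def by simp
    have ED: "EE n Dt u v G = EE n (tensT n m c a) u v G - EE n tensS u v G"
      unfolding Dt_def by (rule EE_diff)
    have GG: "(\<Sum>k<2*n. G k * G k) = rG ^ 2"
      unfolding rG_def rnorm_dotp dotp_def using dotp_nonneg[of n G] unfolding dotp_def by simp
    have rG0: "0 \<le> rG" unfolding rG_def by (rule rnorm_nonneg)
    have bnd: "\<bar>EE n Dt u v G\<bar> \<le> \<delta>0 * rG * (4 * cnorm n x ^ 3 + 4 * cnorm n xn ^ 2 * cnorm n x)"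
      using EE_bound[of n Dt \<delta>0 u v G] op unfolding Dt_def c_def rG_def ru rv by simp
    have p1: "cnorm n x ^ 3 \<le> R ^ 3" unfolding R_def using xnn xpos by (intro power_mono) auto
    have p2: "cnorm n xn ^ 2 * cnorm n x \<le> R ^ 2 * R" unfolding R_def using xnn xpos
      by (intro mult_mono power_mono) auto
    have "4 * cnorm n x ^ 3 + 4 * cnorm n xn ^ 2 * cnorm n x \<le> 8 * R ^ 3"
      using p1 p2 by (simp add: power3_eq_cube power2_eq_square)
    then have "\<delta>0 * rG * (4 * cnorm n x ^ 3 + 4 * cnorm n xn ^ 2 * cnorm n x) \<le> \<delta>0 * rG * (8 * R ^ 3)"
      using d0 rG0 by (intro mult_left_mono) auto
    with bnd have bnd2: "\<bar>EE n Dt u v G\<bar> \<le> 8 * (\<delta>0 * R ^ 3) * rG" by (simp add: algebra_simps)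
    have "rG ^ 2 = - 4 * c * EE n Dt u v G" using GG ES ED ET by simp
    also have "\<dots> \<le> 4 * c * \<bar>EE n Dt u v G\<bar>" using c0 by (simp add: abs_if)
    also have "\<dots> \<le> 4 * c * (8 * (\<delta>0 * R ^ 3) * rG)" using c0 bnd2 by (intro mult_left_mono) auto
    finally have sq: "rG * rG \<le> (32 * (c * \<delta>0 * R ^ 3)) * rG" by (simp add: power2_eq_square algebra_simps)
    define K where "K = c * \<delta>0 * R ^ 3"
    have K0: "0 < K" unfolding K_def using c0 d0 R0 by simp
    have hg': "33 * K \<le> rG" using hg unfolding K_def rG_def G_def c_def R_def u_def by (simp add: algebra_simps)
    then have "0 < rG" using K0 by linarith
    with sq have "rG \<le> 32 * K" unfolding K_def by simp
    with hg' K0 show False by linarith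
  qed
qed (simp)

end
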